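(* Let $M_n=V\,{\rm diag}(\Lambda_{n1},\dots,\Lambda_{nd})V^{-1}$, $n=1,\dots,N$, with $V$ real invertible and $\Lambda_{ni}$ real, let $\gamma=\min_{j<j'}\sum_{n=1}^N(\Lambda_{nj}-\Lambda_{nj'})^2$, and let $U_\circ$ be an orthogonal matrix with ${\rm low}(U_\circ^TM_nU_\circ)=0$ for all $n$. Then for every skew-symmetric $X$, $$\sum_{n=1}^N{\rm Tr}(\dot g_n^T\dot g_n)\ge\varepsilon\|X\|^2,\qquad \dot g_n={\rm low}\big([U_\circ^TM_nU_\circ,X]\big),\qquad \varepsilon=\frac{\gamma}{2\kappa(V)^4}.$$
   Context: ${\rm low}(A)$ is the strictly lower-triangular part of $A$; $[A,B]=AB-BA$; $\|\cdot\|$ is the Frobenius norm; $\kappa(V)=\sigma_{\max}(V)/\sigma_{\min}(V)$. *)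

theory Defs
  imports "HOL-Analysis.Analysis"
begin

definition low :: "((real, 'd::{finite,linorder}) vec, 'd) vec \<Rightarrow> ((real, 'd::{finite,linorder}) vec, 'd) vec" where
  "low A = (\<chi> i j. if j < i then A $ i $ j else 0)"

definition commutator :: "real^('d::finite)^('d::finite) \<Rightarrow> real^('d::finite)^('d::finite) \<Rightarrow> real^('d::finite)^('d::finite)" where
  "commutator A B = A ** B - B ** A"

definition diag_mat :: "('d::finite \<Rightarrow> real) \<Rightarrow> real^('d::finite)^('d::finite)" where
  "diag_mat l = (\<chi> i j. if i = j then l i else 0)"

definition frob_norm :: "real^('d::finite)^('d::finite) \<Rightarrow> real" where
  "frob_norm A = sqrt (\<Sum>i\<in>UNIV. \<Sum>j\<in>UNIV. (A $ i $ j)^2)"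

definition skew_symmetric :: "real^('d::finite)^('d::finite) \<Rightarrow> bool" where
  "skew_symmetric X \<longleftrightarrow> transpose X = - X"

text \<open>Largest and smallest singular value via their variational characterisation
  (operator 2-norm, and minimum of norm(Vx) over unit vectors).\<close>
definition sigma_max :: "real^('d::finite)^('d::finite) \<Rightarrow> real" where
  "sigma_max V = onorm (\<lambda>x. V *v x)"

definition sigma_min :: "real^('d::finite)^('d::finite) \<Rightarrow> real" where
  "sigma_min V = Inf {norm (V *v x) | x. norm x = 1}"

definition cond_num :: "real^('d::finite)^('d::finite) \<Rightarrow> real" where
  "cond_num V = sigma_max V / sigma_min V"

end

theory Submission
  imports Defs
begin

definition Fs :: "((real, 'd::finite) vec, 'd) vec \<Rightarrow> real" where
  "Fs A = (\<Sum>i\<in>UNIV. \<Sum>j\<in>UNIV. (A $ i $ j)^2)"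

definition isup :: "((real, 'd::{finite,linorder}) vec, 'd) vec \<Rightarrow> bool" where
  "isup A \<longleftrightarrow> (\<forall>i j. j < i \<longrightarrow> A $ i $ j = 0)"

definition islow :: "((real, 'd::{finite,linorder}) vec, 'd) vec \<Rightarrow> bool" where
  "islow A \<longleftrightarrow> (\<forall>i j. \<not> j < i \<longrightarrow> A $ i $ j = 0)"

lemma low_nth: "low A $ i $ j = (if j < i then A $ i $ j else 0)"
  by (simp add: low_def)

lemma islow_low: "islow (low A)"
  by (simp add: islow_def low_nth)

lemma low_islow: "islow A \<Longrightarrow> low A = A"
  by (auto simp: islow_def low_nth vec_eq_iff)

lemma low_isup: "isup A \<Longrightarrow> low A = 0"
  by (auto simp: isup_def low_nth vec_eq_iff)

lemma low_add: "low (A + B) = low A + low B"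
  by (auto simp: low_nth vec_eq_iff)

lemma low_diff: "low (A - B) = low A - low B"
  by (auto simp: low_nth vec_eq_iff)

lemma isup_diff_low: "isup (A - low A)"
  by (auto simp: isup_def low_nth)

lemma isup_diff: "isup A \<Longrightarrow> isup B \<Longrightarrow> isup (A - B)"
  by (auto simp: isup_def)

lemma isup_of_low0: "low A = 0 \<Longrightarrow> isup A"
  by (auto simp: isup_def low_nth vec_eq_iff) (metis)

lemma isup_mult: assumes "isup A" "isup B" shows "isup (A ** B)"
  unfolding isup_def
proof (intro allI impI)
  fix i j :: 'a assume ji: "j < i"
  have "\<And>k. A $ i $ k * B $ k $ j = 0"
  proof -
    fix k show "A $ i $ k * B $ k $ j = 0"
    proof (cases "k < i")
      case True then show ?thesis using assms(1) by (simp add: isup_def)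
    next
      case False then have "j < k" using ji by auto
      then show ?thesis using assms(2) by (simp add: isup_def)
    qed
  qed
  then have "(\<Sum>k\<in>UNIV. A $ i $ k * B $ k $ j) = 0" by (intro sum.neutral) blast
  then show "(A ** B) $ i $ j = 0" by (simp add: matrix_matrix_mult_def)
qed

lemma isup_transpose_low: "islow A \<Longrightarrow> isup (transpose A)"
  by (auto simp: isup_def islow_def transpose_def)

lemma isup_comm: "isup A \<Longrightarrow> isup B \<Longrightarrow> isup (commutator A B)"
  by (simp add: commutator_def isup_diff isup_mult)

lemma mat_sub_ldistrib: "(A::real^'n^'m) ** (B - C) = A ** B - A ** (C::real^'p^'n)"
  by (simp add: matrix_matrix_mult_def vec_eq_iff sum_subtractf algebra_simps)

lemma mat_sub_rdistrib: "((B::real^'n^'m) - C) ** (A::real^'p^'n) = B ** A - C ** A"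
  by (simp add: matrix_matrix_mult_def vec_eq_iff sum_subtractf algebra_simps)

lemma Fs_nonneg: "0 \<le> Fs A"
  by (simp add: Fs_def sum_nonneg)

lemma Fs_low_le: "Fs (low A) \<le> Fs A"
  unfolding Fs_def by (intro sum_mono) (auto simp: low_nth)

lemma Fs_transpose: "Fs (transpose A) = Fs A"
  unfolding Fs_def transpose_def by simp (rule sum.swap)

lemma trace_Fs: "trace (transpose A ** A) = Fs A"
  unfolding trace_def Fs_def matrix_matrix_mult_def transpose_def
  by (simp add: power2_eq_square) (rule sum.swap)

lemma frob_Fs: "(frob_norm A)^2 = Fs A"
  unfolding frob_norm_def Fs_def by (simp add: sum_nonneg)

lemma norm_sq: "(norm (x::real^'n))^2 = (\<Sum>i\<in>UNIV. (x $ i)^2)"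
  by (simp add: norm_vec_def L2_set_def sum_nonneg)

lemma Fs_cols: "Fs A = (\<Sum>j\<in>UNIV. (norm (\<chi> k. A $ k $ j))^2)"
  unfolding Fs_def norm_sq by simp (rule sum.swap)

lemma Fs_left:
  assumes "\<And>y. norm (M *v y) \<le> s * norm y"
  shows "Fs (M ** A) \<le> s^2 * Fs A"
proof -
  have col: "(\<chi> k. (M ** A) $ k $ j) = M *v (\<chi> k. A $ k $ j)" for j
    by (simp add: vec_eq_iff matrix_matrix_mult_def matrix_vector_mult_def)
  have "(norm (M *v (\<chi> k. A $ k $ j)))^2 \<le> s^2 * (norm (\<chi> k. A $ k $ j))^2" for j
  proof -
    have "norm (M *v (\<chi> k. A $ k $ j)) \<le> s * norm (\<chi> k. A $ k $ j)" by (rule assms)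
    then have "(norm (M *v (\<chi> k. A $ k $ j)))^2 \<le> (s * norm (\<chi> k. A $ k $ j))^2"
      by (intro power_mono) auto
    then show ?thesis by (simp add: power_mult_distrib)
  qed
  then show ?thesis unfolding Fs_cols col
    by (simp add: sum_distrib_left sum_mono)
qed

lemma transpose_bound:
  assumes "\<And>y. norm (M *v y) \<le> s * norm y" "0 \<le> s"
  shows "norm (transpose M *v x) \<le> s * norm (x::real^'n)"
proof -
  define z where "z = transpose M *v x"
  have "(norm z)^2 = z \<bullet> z" by (simp add: power2_norm_eq_inner)
  also have "z \<bullet> z = x \<bullet> (M *v z)"
  proof -
    have "z = x v* M" unfolding z_def using vector_transpose_matrix[of x "transpose M"] by simp
    then have "z \<bullet> z = (x v* M) \<bullet> z" by simp
    also have "\<dots> = x \<bullet> (M *v z)" by (rule dot_lmul_matrix)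
    finally show ?thesis .
  qed
  also have "\<dots> \<le> norm x * norm (M *v z)" by (rule norm_cauchy_schwarz)
  also have "\<dots> \<le> norm x * (s * norm z)" by (rule mult_left_mono[OF assms(1)]) simp
  finally have h: "(norm z)^2 \<le> (s * norm x) * norm z" by (simp add: algebra_simps)
  show ?thesis
  proof (cases "norm z = 0")
    case True then have "norm (transpose M *v x) = 0" by (simp add: z_def)
    moreover have "0 \<le> s * norm x" using assms(2) by simp
    ultimately show ?thesis by linarith
  next
    case False then have "norm z > 0" by simp
    have "norm z * norm z \<le> (s * norm x) * norm z" using h by (simp add: power2_eq_square)
    then have "norm z \<le> s * norm x" using \<open>norm z > 0\<close> by (rule mult_right_le_imp_le)
    then show ?thesis by (simp add: z_def)
  qed
qed

lemma Fs_right: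
  assumes "\<And>y. norm (transpose M *v y) \<le> s * norm y"
  shows "Fs (A ** M) \<le> s^2 * Fs A"
proof -
  have "Fs (A ** M) = Fs (transpose M ** transpose A)"
    by (metis Fs_transpose matrix_transpose_mul)
  also have "\<dots> \<le> s^2 * Fs (transpose A)" by (rule Fs_left[OF assms])
  finally show ?thesis by (simp add: Fs_transpose)
qed


lemma L1:
  fixes A Ai B :: "((real, 'd::{finite,linorder}) vec, 'd) vec"
  assumes "isup A" "isup Ai" "A ** Ai = mat 1" "Ai ** A = mat 1" "islow B"
  shows "low (A ** low (Ai ** B ** A) ** Ai) = B"
proof -
  define C where "C = Ai ** B ** A"
  define U where "U = C - low C"
  have U: "isup U" unfolding U_def by (rule isup_diff_low)
  have "A ** C ** Ai = B"
  proof -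
    have "A ** C ** Ai = (A ** Ai) ** B ** (A ** Ai)"
      unfolding C_def by (simp add: matrix_mul_assoc)
    then show ?thesis using assms(3) by simp
  qed
  have "A ** low C ** Ai = A ** (C - U) ** Ai" unfolding U_def by simp
  also have "\<dots> = A ** C ** Ai - A ** U ** Ai" by (simp add: mat_sub_ldistrib mat_sub_rdistrib)
  finally have "A ** low C ** Ai = B - A ** U ** Ai" using \<open>A ** C ** Ai = B\<close> by simp
  then have "low (A ** low C ** Ai) = low B - low (A ** U ** Ai)" by (simp add: low_diff)
  also have "low (A ** U ** Ai) = 0" by (intro low_isup isup_mult assms U)
  finally show ?thesis using low_islow[OF assms(5)] C_def by simp
qed

lemma diag_comm_nth:
  "commutator (diag_mat d) Z $ i $ j = (d i - d j) * Z $ i $ j"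
proof -
  have 1: "(\<Sum>k\<in>UNIV. (if i = k then d i else 0) * Z $ k $ j) = d i * Z $ i $ j"
  proof -
    have "(\<Sum>k\<in>UNIV. (if i = k then d i else 0) * Z $ k $ j) = (\<Sum>k\<in>UNIV. if k = i then d i * Z $ i $ j else 0)"
      by (rule sum.cong) auto
    then show ?thesis by simp
  qed
  have 2: "(\<Sum>k\<in>UNIV. Z $ i $ k * (if k = j then d k else 0)) = Z $ i $ j * d j"
  proof -
    have "(\<Sum>k\<in>UNIV. Z $ i $ k * (if k = j then d k else 0)) = (\<Sum>k\<in>UNIV. if k = j then Z $ i $ j * d j else 0)"
      by (rule sum.cong) auto
    then show ?thesis by simp
  qed
  show ?thesis unfolding commutator_def diag_mat_def matrix_matrix_mult_def
    using 1 2 by (simp add: algebra_simps)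
qed

lemma L2:
  fixes T R Ri D Y :: "((real, 'd::{finite,linorder}) vec, 'd) vec"
  assumes "isup T" "isup R" "isup Ri" "R ** Ri = mat 1" "Ri ** R = mat 1" "islow Y"
    and "T = R ** D ** Ri"
  shows "low (commutator T Y) = low (R ** commutator D (low (Ri ** Y ** R)) ** Ri)"
proof -
  define Z where "Z = low (Ri ** Y ** R)"
  define Q where "Q = R ** Z ** Ri"
  have "low Q = Y" unfolding Q_def Z_def by (rule L1[OF assms(2-6)])
  then have U: "isup (Q - Y)" using isup_diff_low[of Q] by simp
  have cT: "commutator T Y = commutator T Q - commutator T (Q - Y)"
    by (simp add: commutator_def mat_sub_ldistrib mat_sub_rdistrib)
  have "commutator T Q = R ** commutator D Z ** Ri"
  proof -
    have "T ** Q = R ** D ** (Ri ** R) ** Z ** Ri" unfolding assms(7) Q_def by (simp add: matrix_mul_assoc)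
    also have "\<dots> = R ** D ** Z ** Ri" using assms(5) by simp
    finally have a: "T ** Q = R ** D ** Z ** Ri" .
    have "Q ** T = R ** Z ** (Ri ** R) ** D ** Ri" unfolding assms(7) Q_def by (simp add: matrix_mul_assoc)
    also have "\<dots> = R ** Z ** D ** Ri" using assms(5) by simp
    finally have b: "Q ** T = R ** Z ** D ** Ri" .
    show ?thesis unfolding commutator_def a b by (simp add: mat_sub_ldistrib mat_sub_rdistrib matrix_mul_assoc)
  qed
  moreover have "low (commutator T (Q - Y)) = 0" by (intro low_isup isup_comm assms U)
  ultimately show ?thesis unfolding cT Z_def[symmetric] by (simp add: low_diff)
qed

lemma up_inv:
  fixes R Ri :: "((real, 'd::{finite,linorder}) vec, 'd) vec"
  assumes "isup R" "\<And>i. R $ i $ i \<noteq> 0" "R ** Ri = mat 1"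
  shows "isup Ri"
  unfolding isup_def
proof (intro allI impI)
  fix i j :: 'd
  show "j < i \<Longrightarrow> Ri $ i $ j = 0"
  proof (induction i rule: measure_induct_rule[where f = "\<lambda>i. card {k::'d. i < k}"])
    case (less i)
    have eq: "\<And>k. R $ i $ k * Ri $ k $ j = (if k = i then R $ i $ i * Ri $ i $ j else 0)"
    proof -
      fix k
      show "R $ i $ k * Ri $ k $ j = (if k = i then R $ i $ i * Ri $ i $ j else 0)"
      proof (cases "k < i")
        case True then show ?thesis using assms(1) by (auto simp: isup_def)
      next
        case False
        show ?thesis
        proof (cases "k = i")
          case False
          with \<open>\<not> k < i\<close> have ik: "i < k" by auto
          have "{k'. k < k'} \<subset> {k'. i < k'}" using ik by auto
          then have "card {k'. k < k'} < card {k'. i < k'}" by (intro psubset_card_mono) auto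
          moreover have "j < k" using ik less.prems by auto
          ultimately have "Ri $ k $ j = 0" using less.IH by blast
          then show ?thesis using False by simp
        qed simp
      qed
    qed
    have "(R ** Ri) $ i $ j = (\<Sum>k\<in>UNIV. if k = i then R $ i $ i * Ri $ i $ j else 0)"
      apply (subst matrix_matrix_mult_def)
      apply (simp only: vec_lambda_beta)
      apply (rule sum.cong[OF refl])
      by (rule eq)
    also have "\<dots> = R $ i $ i * Ri $ i $ j" by simp
    finally have "(R ** Ri) $ i $ j = R $ i $ i * Ri $ i $ j" .
    moreover have "(R ** Ri) $ i $ j = 0" using assms(3) less.prems by (simp add: mat_def)
    ultimately show ?case using assms(2)[of i] by simp
  qed
qed


lemma Fs_conj:
  fixes R Ri A :: "((real, 'd::finite) vec, 'd) vec"
  assumes "\<And>y. norm (R *v y) \<le> a * norm y" "\<And>y. norm (transpose Ri *v y) \<le> c * norm y"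
  shows "Fs (R ** A ** Ri) \<le> (a * c)^2 * Fs A"
proof -
  have "Fs ((R ** A) ** Ri) \<le> c^2 * Fs (R ** A)" by (rule Fs_right[OF assms(2)])
  also have "\<dots> \<le> c^2 * (a^2 * Fs A)" by (intro mult_left_mono Fs_left[OF assms(1)]) simp
  finally show ?thesis by (simp add: power_mult_distrib algebra_simps)
qed

lemma chain:
  fixes T :: "nat \<Rightarrow> ((real, 'd::{finite,linorder}) vec, 'd) vec"
    and R Ri Y :: "((real, 'd) vec, 'd) vec"
  assumes up: "\<And>n. n \<in> {1..N} \<Longrightarrow> isup (T n)"
    and R: "isup R" "isup Ri" "R ** Ri = mat 1" "Ri ** R = mat 1"
    and Td: "\<And>n. n \<in> {1..N} \<Longrightarrow> T n = R ** diag_mat (d n) ** Ri"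
    and b1: "\<And>y. norm (R *v y) \<le> a * norm y" "\<And>y. norm (transpose R *v y) \<le> a * norm y"
    and b2: "\<And>y. norm (Ri *v y) \<le> c * norm y" "\<And>y. norm (transpose Ri *v y) \<le> c * norm y"
    and gam: "\<And>i j. i \<noteq> j \<Longrightarrow> \<gamma> \<le> (\<Sum>n=1..N. (d n i - d n j)^2)"
    and g0: "0 \<le> \<gamma>"
    and Y: "islow Y"
  shows "\<gamma> * Fs Y \<le> ((a * c)^2)^2 * (\<Sum>n=1..N. Fs (low (commutator (T n) Y)))"
proof -
  define k where "k = (a * c)^2"
  have k0: "0 \<le> k" unfolding k_def by simp
  define Z where "Z = low (Ri ** Y ** R)"
  have Zl: "islow Z" unfolding Z_def by (rule islow_low)
  define B where "B n = commutator (diag_mat (d n)) Z" for n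
  have Bl: "islow (B n)" for n
    using Zl unfolding islow_def B_def diag_comm_nth by simp
  have FY: "Fs Y \<le> k * Fs Z"
  proof -
    have "Y = low (R ** Z ** Ri)" unfolding Z_def by (rule L1[OF R Y, symmetric])
    then have "Fs Y \<le> Fs (R ** Z ** Ri)" using Fs_low_le by metis
    also have "\<dots> \<le> k * Fs Z" unfolding k_def by (rule Fs_conj[OF b1(1) b2(2)])
    finally show ?thesis .
  qed
  have C: "low (commutator (T n) Y) = low (R ** B n ** Ri)" if "n \<in> {1..N}" for n
    unfolding B_def Z_def by (rule L2[OF up[OF that] R Y Td[OF that]])
  have FB: "Fs (B n) \<le> k * Fs (low (commutator (T n) Y))" if "n \<in> {1..N}" for n
  proof -
    have "B n = low (Ri ** low (R ** B n ** Ri) ** R)"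
      by (rule L1[OF R(2) R(1) R(4) R(3) Bl, symmetric])
    then have "Fs (B n) \<le> Fs (Ri ** low (R ** B n ** Ri) ** R)" using Fs_low_le by metis
    also have "\<dots> \<le> (c * a)^2 * Fs (low (R ** B n ** Ri))" by (rule Fs_conj[OF b2(1) b1(2)])
    finally show ?thesis unfolding C[OF that] k_def by (simp add: algebra_simps)
  qed
  have FZ: "\<gamma> * Fs Z \<le> (\<Sum>n=1..N. Fs (B n))"
  proof -
    have trm: "\<gamma> * (Z $ i $ j)^2 \<le> (\<Sum>n=1..N. (B n $ i $ j)^2)" for i j
    proof -
      have e: "(\<Sum>n=1..N. (B n $ i $ j)^2) = (Z $ i $ j)^2 * (\<Sum>n=1..N. (d n i - d n j)^2)"
        unfolding B_def diag_comm_nth sum_distrib_left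
        by (rule sum.cong[OF refl]) (simp add: power2_eq_square algebra_simps)
      show ?thesis
      proof (cases "Z $ i $ j = 0")
        case True then show ?thesis unfolding e by simp
      next
        case False
        then have "i \<noteq> j" using Zl unfolding islow_def by auto
        then have "\<gamma> \<le> (\<Sum>n=1..N. (d n i - d n j)^2)" by (rule gam)
        then have "(Z $ i $ j)^2 * \<gamma> \<le> (Z $ i $ j)^2 * (\<Sum>n=1..N. (d n i - d n j)^2)"
          by (rule mult_left_mono) simp
        then show ?thesis unfolding e by (simp add: mult.commute)
      qed
    qed
    have "\<gamma> * Fs Z = (\<Sum>i\<in>UNIV. \<Sum>j\<in>UNIV. \<gamma> * (Z $ i $ j)^2)"
      unfolding Fs_def by (simp add: sum_distrib_left)
    also have "\<dots> \<le> (\<Sum>i\<in>UNIV. \<Sum>j\<in>UNIV. \<Sum>n=1..N. (B n $ i $ j)^2)"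
      by (intro sum_mono trm)
    also have "\<dots> = (\<Sum>n=1..N. Fs (B n))"
      unfolding Fs_def
      by (subst sum.swap, subst (2) sum.swap, rule refl) 
    finally show ?thesis .
  qed
  have "\<gamma> * Fs Y \<le> \<gamma> * (k * Fs Z)" by (intro mult_left_mono FY g0)
  also have "\<dots> = k * (\<gamma> * Fs Z)" by simp
  also have "\<dots> \<le> k * (\<Sum>n=1..N. Fs (B n))" by (intro mult_left_mono FZ k0)
  also have "\<dots> \<le> k * (\<Sum>n=1..N. k * Fs (low (commutator (T n) Y)))"
    by (intro mult_left_mono sum_mono FB k0) auto
  also have "\<dots> = k^2 * (\<Sum>n=1..N. Fs (low (commutator (T n) Y)))"
    by (simp add: sum_distrib_left power2_eq_square mult.assoc)
  finally show ?thesis unfolding k_def .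
qed


lemma mult_diag_nth: "(W ** diag_mat l) $ i $ j = W $ i $ j * l j"
proof -
  have "(\<Sum>k\<in>UNIV. W $ i $ k * (if k = j then l k else 0)) = (\<Sum>k\<in>UNIV. if k = j then W $ i $ j * l j else 0)"
    by (rule sum.cong) auto
  then show ?thesis by (simp add: matrix_matrix_mult_def diag_mat_def)
qed

lemma construct:
  fixes W Wi :: "((real, 'd::{finite,linorder}) vec, 'd) vec"
    and T :: "nat \<Rightarrow> ((real, 'd) vec, 'd) vec" and l :: "nat \<Rightarrow> 'd \<Rightarrow> real"
  assumes WW: "Wi ** W = mat 1"
    and TW: "\<And>n. n \<in> {1..N} \<Longrightarrow> T n ** W = W ** diag_mat (l n)"
    and up: "\<And>n. n \<in> {1..N} \<Longrightarrow> isup (T n)"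
    and dist: "\<And>c c'. c \<noteq> c' \<Longrightarrow> \<exists>n\<in>{1..N}. l n c \<noteq> l n c'"
  shows "\<exists>p. bij p \<and> isup (\<chi> i j. W $ i $ (p j)) \<and> (\<forall>i. W $ i $ (p i) \<noteq> 0)"
proof -
  define ell where "ell c = Max {k. W $ k $ c \<noteq> 0}" for c
  have ne: "{k. W $ k $ c \<noteq> 0} \<noteq> {}" for c
  proof
    assume "{k. W $ k $ c \<noteq> 0} = {}"
    then have "\<And>k. W $ k $ c = 0" by auto
    then have "(Wi ** W) $ c $ c = 0" by (simp add: matrix_matrix_mult_def)
    then show False using WW by (simp add: mat_def)
  qed
  have l1: "W $ (ell c) $ c \<noteq> 0" for c
    using Max_in[OF _ ne[of c]] unfolding ell_def by auto
  have l2: "W $ k $ c = 0" if "ell c < k" for c k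
  proof (rule ccontr)
    assume "W $ k $ c \<noteq> 0"
    then have "k \<le> ell c" unfolding ell_def by (intro Max_ge) auto
    with that show False by simp
  qed
  have key: "T n $ (ell c) $ (ell c) = l n c" if n: "n \<in> {1..N}" for n c
  proof -
    have eq: "T n $ (ell c) $ i * W $ i $ c = (if i = ell c then T n $ (ell c) $ (ell c) * W $ (ell c) $ c else 0)" for i
    proof (cases "i < ell c")
      case True then show ?thesis using up[OF n] by (auto simp: isup_def)
    next
      case False
      show ?thesis
      proof (cases "i = ell c")
        case False
        with \<open>\<not> i < ell c\<close> have "ell c < i" by auto
        then show ?thesis using l2 False by simp
      qed simp
    qed
    have "(T n ** W) $ (ell c) $ c = (\<Sum>i\<in>UNIV. if i = ell c then T n $ (ell c) $ (ell c) * W $ (ell c) $ c else 0)"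
      apply (subst matrix_matrix_mult_def)
      apply (simp only: vec_lambda_beta)
      apply (rule sum.cong[OF refl])
      by (rule eq)
    also have "\<dots> = T n $ (ell c) $ (ell c) * W $ (ell c) $ c" by simp
    finally have "T n $ (ell c) $ (ell c) * W $ (ell c) $ c = W $ (ell c) $ c * l n c"
      using TW[OF n] mult_diag_nth by metis
    then show ?thesis using l1[of c] by (simp add: mult.commute)
  qed
  have "inj ell"
  proof (rule injI, rule ccontr)
    fix c c' assume e: "ell c = ell c'" and ne: "c \<noteq> c'"
    obtain n where n: "n \<in> {1..N}" "l n c \<noteq> l n c'" using dist[OF ne] by blast
    have "l n c = l n c'" using key[OF n(1), of c] key[OF n(1), of c'] e by simp
    with n show False by simp
  qed
  then have "surj ell" using finite_UNIV_inj_surj[of ell] by simp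
  with \<open>inj ell\<close> have bij: "bij ell" by (simp add: bij_def)
  define p where "p = inv ell"
  have bp: "bij p" unfolding p_def by (rule bij_imp_bij_inv[OF bij])
  have lp: "ell (p j) = j" for j unfolding p_def by (meson bij bij_inv_eq_iff)
  have "isup (\<chi> i j. W $ i $ (p j))"
    unfolding isup_def using l2 lp by simp
  moreover have "\<forall>i. W $ i $ (p i) \<noteq> 0" using l1 lp by metis
  ultimately show ?thesis using bp by blast
qed

lemma perm1:
  fixes W Wi :: "((real, 'd::finite) vec, 'd) vec"
  assumes "bij p"
  shows "(\<chi> i j. W $ i $ (p j)) ** (\<chi> i j. Wi $ (p i) $ j) = W ** Wi"
proof -
  have b: "bij_betw p UNIV UNIV" using assms by (simp add: bij_def bij_betw_def)
  show ?thesis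
    unfolding matrix_matrix_mult_def
    by (simp add: sum.reindex_bij_betw[OF b, where g = "\<lambda>c. W $ _ $ c * Wi $ c $ _"])
qed

lemma perm2:
  fixes W Wi :: "((real, 'd::finite) vec, 'd) vec"
  assumes "bij p" "Wi ** W = mat 1"
  shows "(\<chi> i j. Wi $ (p i) $ j) ** (\<chi> i j. W $ i $ (p j)) = mat 1"
proof -
  have "(\<chi> i j. Wi $ (p i) $ j) ** (\<chi> i j. W $ i $ (p j)) = (\<chi> i j. (Wi ** W) $ (p i) $ (p j))"
    by (simp add: matrix_matrix_mult_def)
  also have "\<dots> = mat 1" using assms bij_is_inj[OF assms(1)]
    by (auto simp: mat_def vec_eq_iff inj_eq)
  finally show ?thesis .
qed

lemma perm3:
  fixes W Wi :: "((real, 'd::finite) vec, 'd) vec"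
  assumes "bij p"
  shows "(\<chi> i j. W $ i $ (p j)) ** diag_mat (\<lambda>i. l (p i)) ** (\<chi> i j. Wi $ (p i) $ j) = W ** diag_mat l ** Wi"
proof -
  have b: "bij_betw p UNIV UNIV" using assms by (simp add: bij_def bij_betw_def)
  show ?thesis
    unfolding vec_eq_iff
    apply (simp add: matrix_matrix_mult_def[of "_ ** _"] mult_diag_nth)
    apply (intro allI)
    subgoal for i j
      by (rule sum.reindex_bij_betw[OF b, of "\<lambda>c. W $ i $ c * l c * Wi $ c $ j"])
    done
qed

lemma perm4:
  fixes W :: "((real, 'd::finite) vec, 'd) vec"
  assumes "bij p"
  shows "(\<chi> i j. W $ i $ (p j)) *v y = W *v (\<chi> c. y $ (inv p c))"
proof -
  have b: "bij_betw p UNIV UNIV" using assms by (simp add: bij_def bij_betw_def)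
  have ip: "inv p (p j) = j" for j using assms by (simp add: bij_is_inj)
  show ?thesis
    unfolding matrix_vector_mult_def vec_eq_iff
    by (simp add: sum.reindex_bij_betw[OF b, where g = "\<lambda>c. W $ _ $ c * y $ (inv p c)", symmetric] ip)
qed

lemma perm5:
  fixes y :: "real^'d::finite"
  assumes "bij p"
  shows "norm (\<chi> c. y $ (inv p c)) = norm y"
proof -
  have b: "bij_betw (inv p) UNIV UNIV" using bij_imp_bij_inv[OF assms] by (simp add: bij_def bij_betw_def)
  have "(norm (\<chi> c. y $ (inv p c)))^2 = (norm y)^2"
    unfolding norm_sq by (simp add: sum.reindex_bij_betw[OF b, where g = "\<lambda>c. (y $ c)^2"])
  then show ?thesis by (simp add: power2_eq_iff_nonneg)
qed

lemma sig_max: "norm (V *v x) \<le> sigma_max V * norm x"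
  unfolding sigma_max_def using onorm[OF matrix_vector_mul_bounded_linear[of V]] by simp

lemma sig_min0: "0 \<le> sigma_min (V :: ((real, 'd::finite) vec, 'd) vec)"
  unfolding sigma_min_def
proof (rule cInf_greatest)
  show "{norm (V *v x) |x. norm x = 1} \<noteq> {}"
    using norm_axis_1[of "undefined :: 'd"] by blast
qed auto

lemma sig_min: "sigma_min V * norm x \<le> norm (V *v (x :: real^'d::finite))"
proof (cases "x = 0")
  case True then show ?thesis by simp
next
  case False
  then have nx: "norm x > 0" by simp
  have "sigma_min V \<le> norm (V *v sgn x)"
    unfolding sigma_min_def
  proof (rule cInf_lower)
    show "norm (V *v sgn x) \<in> {norm (V *v x) |x. norm x = 1}"
      using False by (auto simp: norm_sgn)
    show "bdd_below {norm (V *v x) |x. norm x = 1}" by (rule bdd_belowI[of _ 0]) auto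
  qed
  also have "V *v sgn x = (1 / norm x) *\<^sub>R (V *v x)"
    by (simp add: sgn_div_norm matrix_vector_mult_scaleR divide_inverse_commute)
  finally have "sigma_min V \<le> norm (V *v x) / norm x" by simp
  then show ?thesis using nx by (simp add: pos_le_divide_eq)
qed

lemma orth_norm:
  assumes "orthogonal_matrix U"
  shows "norm (transpose U *v x) = norm (x :: real^'d::finite)"
proof -
  have u: "U ** transpose U = mat 1" using assms by (simp add: orthogonal_matrix_def)
  have tx: "transpose U *v x = x v* U" by (metis vector_transpose_matrix transpose_transpose)
  have "(norm (transpose U *v x))^2 = (transpose U *v x) \<bullet> (transpose U *v x)"
    by (simp only: power2_norm_eq_inner)
  also have "\<dots> = (x v* U) \<bullet> (transpose U *v x)" by (simp only: tx)
  also have "\<dots> = x \<bullet> (U *v (transpose U *v x))" by (rule dot_lmul_matrix)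
  also have "\<dots> = x \<bullet> ((U ** transpose U) *v x)" by (simp only: matrix_vector_mul_assoc)
  also have "\<dots> = x \<bullet> x" by (simp only: u matrix_vector_mul_lid)
  finally have "(norm (transpose U *v x))^2 = (norm x)^2" by (simp add: power2_norm_eq_inner)
  then show ?thesis by (simp add: power2_eq_iff_nonneg)
qed


lemma skew_nth:
  assumes "skew_symmetric X" shows "X $ j $ i = - X $ i $ j"
proof -
  have "transpose X = - X" using assms by (simp add: skew_symmetric_def)
  then have "(transpose X) $ i $ j = (- X) $ i $ j" by simp
  then show ?thesis by (simp add: transpose_def)
qed

lemma skew_split:
  assumes "skew_symmetric X" shows "X = low X - transpose (low X)"
  unfolding vec_eq_iff
proof (intro allI)
  fix i j
  have d: "X $ i $ i = 0" using skew_nth[OF assms, of i i] by simp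
  show "X $ i $ j = (low X - transpose (low X)) $ i $ j"
    using skew_nth[OF assms, of i j] d
    by (cases i j rule: linorder_cases) (auto simp: low_nth transpose_def)
qed

lemma skew_Fs:
  assumes "skew_symmetric X" shows "Fs X = 2 * Fs (low X)"
proof -
  have e: "(X $ i $ j)^2 = (low X $ i $ j)^2 + (transpose (low X) $ i $ j)^2" for i j
  proof -
    have d: "X $ i $ i = 0" using skew_nth[OF assms, of i i] by simp
    show ?thesis using skew_nth[OF assms, of i j] d
      by (cases i j rule: linorder_cases) (auto simp: low_nth transpose_def)
  qed
  have "Fs X = Fs (low X) + Fs (transpose (low X))"
    unfolding Fs_def e by (simp add: sum.distrib)
  then show ?thesis by (simp add: Fs_transpose)
qed

lemma low_comm_skew:
  assumes "isup T" "skew_symmetric X"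
  shows "low (commutator T X) = low (commutator T (low X))"
proof -
  have "commutator T X = commutator T (low X) - commutator T (transpose (low X))"
    apply (subst skew_split[OF assms(2)])
    by (simp add: commutator_def mat_sub_ldistrib mat_sub_rdistrib)
  moreover have "low (commutator T (transpose (low X))) = 0"
    by (intro low_isup isup_comm assms isup_transpose_low islow_low)
  ultimately show ?thesis by (simp add: low_diff)
qed

lemma Min_facts:
  fixes \<Lambda> :: "nat \<Rightarrow> 'd::{finite,linorder} \<Rightarrow> real"
  assumes "c \<noteq> c'"
  shows "Min {(\<Sum>n=1..N. (\<Lambda> n j - \<Lambda> n j')^2) | j j'. j < j'} \<le> (\<Sum>n=1..N. (\<Lambda> n c - \<Lambda> n c')^2)"
proof -
  define f where "f j j' = (\<Sum>n=1..N. (\<Lambda> n j - \<Lambda> n j')^2)" for j j'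
  have fin: "finite {f j j' | j j'. j < j'}"
    by (rule finite_subset[of _ "(\<lambda>(j,j'). f j j') ` UNIV"]) auto
  have sym: "f c c' = f c' c" unfolding f_def by (simp add: power2_commute)
  show ?thesis unfolding f_def[symmetric]
  proof (cases "c < c'")
    case True then show "Min {f j j' | j j'. j < j'} \<le> f c c'" by (intro Min_le fin) auto
  next
    case False then have "c' < c" using assms by auto
    then have "Min {f j j' | j j'. j < j'} \<le> f c' c" by (intro Min_le fin) auto
    then show "Min {f j j' | j j'. j < j'} \<le> f c c'" using sym by simp
  qed
qed


theorem lemma10:
  fixes V U0 :: "((real, 'd::{finite,linorder}) vec, 'd) vec"
    and \<Lambda> :: "nat \<Rightarrow> 'd \<Rightarrow> real"
    and M :: "nat \<Rightarrow> ((real, 'd) vec, 'd) vec"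
    and N :: nat
    and X :: "((real, 'd) vec, 'd) vec"
  assumes "invertible V"
    and "\<And>n. n \<in> {1..N} \<Longrightarrow> M n = V ** diag_mat (\<Lambda> n) ** matrix_inv V"
    and "orthogonal_matrix U0"
    and "\<And>n. n \<in> {1..N} \<Longrightarrow> low (transpose U0 ** M n ** U0) = 0"
    and "skew_symmetric X"
  shows "(\<Sum>n=1..N. trace (transpose (low (commutator (transpose U0 ** M n ** U0) X))
                         ** low (commutator (transpose U0 ** M n ** U0) X)))
         \<ge> (Min {(\<Sum>n=1..N. (\<Lambda> n j - \<Lambda> n j')^2) | j j'. j < j'} / (2 * cond_num V ^ 4))
            * (frob_norm X)^2"
proof -
  define T where "T n = transpose U0 ** M n ** U0" for n
  define g where "g = Min {(\<Sum>n=1..N. (\<Lambda> n j - \<Lambda> n j')^2) | j j'. j < j'}"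
  define a where "a = sigma_max V"
  define b where "b = sigma_min V"
  have cn: "cond_num V = a / b" by (simp add: cond_num_def a_def b_def)
  have LHS: "(\<Sum>n=1..N. trace (transpose (low (commutator (transpose U0 ** M n ** U0) X))
                         ** low (commutator (transpose U0 ** M n ** U0) X)))
       = (\<Sum>n=1..N. Fs (low (commutator (T n) X)))"
    by (simp add: trace_Fs T_def)
  have L0: "0 \<le> (\<Sum>n=1..N. Fs (low (commutator (T n) X)))" by (intro sum_nonneg Fs_nonneg)
  have b0: "0 \<le> b" unfolding b_def by (rule sig_min0)
  have FX: "(frob_norm X)^2 = Fs X" by (rule frob_Fs)
  have FX0: "0 \<le> Fs X" by (rule Fs_nonneg)
  have up: "isup (T n)" if "n \<in> {1..N}" for n
    unfolding T_def by (rule isup_of_low0[OF assms(4)[OF that]])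
  show ?thesis
  proof (cases "g \<le> 0 \<or> b = 0")
    case True
    have "g / (2 * cond_num V ^ 4) * (frob_norm X)^2 \<le> 0"
    proof (cases "b = 0")
      case True then show ?thesis by (simp add: cn)
    next
      case False then have "g \<le> 0" using \<open>g \<le> 0 \<or> b = 0\<close> by simp
      then show ?thesis by (intro mult_nonpos_nonneg divide_nonpos_nonneg) auto
    qed
    then show ?thesis unfolding LHS g_def[symmetric] using L0 by linarith
  next
    case False
    then have g0: "0 < g" and bpos: "0 < b" using b0 by auto
    define W where "W = transpose U0 ** V"
    define Wi where "Wi = matrix_inv V ** U0"
    have Vi: "V ** matrix_inv V = mat 1 \<and> matrix_inv V ** V = mat 1"
      using assms(1) unfolding invertible_def matrix_inv_def by (rule someI_ex)
    have U: "transpose U0 ** U0 = mat 1" "U0 ** transpose U0 = mat 1"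
      using assms(3) by (auto simp: orthogonal_matrix_def)
    have WWi: "W ** Wi = mat 1"
    proof -
      have "W ** Wi = transpose U0 ** (V ** matrix_inv V) ** U0"
        unfolding W_def Wi_def by (simp add: matrix_mul_assoc)
      then show ?thesis using Vi U by simp
    qed
    have WiW: "Wi ** W = mat 1"
    proof -
      have "Wi ** W = matrix_inv V ** (U0 ** transpose U0) ** V"
        unfolding W_def Wi_def by (simp add: matrix_mul_assoc)
      then show ?thesis using Vi U by simp
    qed
    have TWD: "T n = W ** diag_mat (\<Lambda> n) ** Wi" if "n \<in> {1..N}" for n
      unfolding T_def assms(2)[OF that] W_def Wi_def by (simp add: matrix_mul_assoc)
    have TW: "T n ** W = W ** diag_mat (\<Lambda> n)" if "n \<in> {1..N}" for n
    proof -
      have "T n ** W = W ** diag_mat (\<Lambda> n) ** (Wi ** W)"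
        unfolding TWD[OF that] by (simp add: matrix_mul_assoc)
      then show ?thesis using WiW by simp
    qed
    have gle: "g \<le> (\<Sum>n=1..N. (\<Lambda> n c - \<Lambda> n c')^2)" if "c \<noteq> c'" for c c'
      unfolding g_def by (rule Min_facts[OF that])
    have dist: "\<exists>n\<in>{1..N}. \<Lambda> n c \<noteq> \<Lambda> n c'" if "c \<noteq> c'" for c c'
    proof (rule ccontr)
      assume "\<not> (\<exists>n\<in>{1..N}. \<Lambda> n c \<noteq> \<Lambda> n c')"
      then have "(\<Sum>n=1..N. (\<Lambda> n c - \<Lambda> n c')^2) = 0" by (intro sum.neutral) auto
      with gle[OF that] g0 show False by simp
    qed
    obtain p where bp: "bij p" and Rup: "isup (\<chi> i j. W $ i $ (p j))"
      and Rd: "\<forall>i. W $ i $ (p i) \<noteq> 0"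
      using construct[OF WiW TW up dist] by blast
    define R where "R = (\<chi> i j. W $ i $ (p j))"
    define Ri where "Ri = (\<chi> i j. Wi $ (p i) $ j)"
    have RRi: "R ** Ri = mat 1" unfolding R_def Ri_def perm1[OF bp] by (rule WWi)
    have RiR: "Ri ** R = mat 1" unfolding R_def Ri_def by (rule perm2[OF bp WiW])
    have Rup': "isup R" using Rup by (simp add: R_def)
    have Riup: "isup Ri" by (rule up_inv[OF Rup']) (use Rd RRi in \<open>auto simp: R_def\<close>)
    have Td: "T n = R ** diag_mat (\<lambda>i. \<Lambda> n (p i)) ** Ri" if "n \<in> {1..N}" for n
      unfolding R_def Ri_def perm3[OF bp] by (rule TWD[OF that])
    have Rv: "norm (R *v y) = norm (V *v (\<chi> c. y $ (inv p c)))" for y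
    proof -
      have "R *v y = transpose U0 *v (V *v (\<chi> c. y $ (inv p c)))"
        unfolding R_def perm4[OF bp] W_def by (simp add: matrix_vector_mul_assoc)
      then show ?thesis using orth_norm[OF assms(3), of "V *v (\<chi> c. y $ (inv p c))"] by (simp only:)
    qed
    have a0: "0 \<le> a" unfolding a_def sigma_max_def
      by (rule onorm_pos_le[OF matrix_vector_mul_bounded_linear])
    have Rb: "norm (R *v y) \<le> a * norm y" for y
      unfolding Rv using sig_max[of V "\<chi> c. y $ (inv p c)"] by (simp add: a_def perm5[OF bp])
    have Rl: "b * norm y \<le> norm (R *v y)" for y
      unfolding Rv using sig_min[of V "\<chi> c. y $ (inv p c)"] by (simp add: b_def perm5[OF bp])
    have Rib: "norm (Ri *v y) \<le> (1 / b) * norm y" for y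
    proof -
      have "b * norm (Ri *v y) \<le> norm (R *v (Ri *v y))" by (rule Rl)
      also have "R *v (Ri *v y) = y" by (simp add: matrix_vector_mul_assoc RRi)
      finally show ?thesis using bpos by (simp add: field_simps)
    qed
    have RbT: "norm (transpose R *v y) \<le> a * norm y" for y
      by (rule transpose_bound[OF Rb a0])
    have RibT: "norm (transpose Ri *v y) \<le> (1 / b) * norm y" for y
      by (rule transpose_bound[OF Rib]) (use bpos in simp)
    have ab: "b \<le> a"
    proof -
      have "b * norm (axis (undefined::'d) (1::real)) \<le> norm (R *v axis undefined 1)" by (rule Rl)
      also have "\<dots> \<le> a * norm (axis (undefined::'d) (1::real))" by (rule Rb)
      finally show ?thesis by simp
    qed
    define Y where "Y = low X"
    have ch: "g * Fs Y \<le> ((a * (1 / b))^2)^2 * (\<Sum>n=1..N. Fs (low (commutator (T n) Y)))"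
      by (rule chain[OF up Rup' Riup RRi RiR Td Rb RbT Rib RibT gle _ islow_low[of X, folded Y_def]])
         (use g0 bij_is_inj[OF bp] in \<open>auto simp: inj_eq\<close>)
    have eqs: "(\<Sum>n=1..N. Fs (low (commutator (T n) X))) = (\<Sum>n=1..N. Fs (low (commutator (T n) Y)))"
      unfolding Y_def by (rule sum.cong[OF refl]) (simp add: low_comm_skew[OF up assms(5)])
    have FXY: "Fs X = 2 * Fs Y" unfolding Y_def by (rule skew_Fs[OF assms(5)])
    define k where "k = (a / b)^4"
    have kpos: "0 < k" unfolding k_def using ab bpos by simp
    have ch': "g * Fs Y \<le> k * (\<Sum>n=1..N. Fs (low (commutator (T n) X)))"
      using ch unfolding eqs k_def by (simp add: power_divide power_mult_distrib field_simps)
    have "g / (2 * cond_num V ^ 4) * (frob_norm X)^2 = g * Fs Y / k"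
      unfolding FX FXY cn k_def by (simp add: field_simps)
    also have "\<dots> \<le> (\<Sum>n=1..N. Fs (low (commutator (T n) X)))"
      using ch' kpos by (simp add: pos_divide_le_eq mult.commute)
    finally show ?thesis unfolding LHS g_def[symmetric] by simp
  qed
qed

end
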